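(* Let $p\ge1$, $s\ge r\ge2$, let $Q$ be an $s$-vertex $r$-graph and let $\mathcal P$ be a hereditary property of $r$-graphs. Then $\lambda^{(p)}(Q,\mathcal P)\ge\pi(Q,\mathcal P)$.
   Context: An $r$-graph ($r\ge 2$) is a finite hypergraph all of whose edges have exactly $r$ vertices. For $I\subseteq V(H)$, $H[I]$ denotes the induced subhypergraph on $I$. For an $s$-vertex $r$-graph $Q$ and an $r$-graph $H$, $\mathcal N(Q,H)$ is the number of (not necessarily induced) subgraphs of $H$ isomorphic to $Q$. For an $n$-vertex $r$-graph $H$ with vertex set $[n]$ and $\mathbf x\in\mathbb R^n$, $P_{Q,H}(\mathbf x)=s!\sum_{\{i_1,\dots,i_s\}\in\binom{[n]}{s}}\mathcal N(Q,H[\{i_1,\dots,i_s\}])\,x_{i_1}\cdots x_{i_s}$, and for $p\ge1$, $\lambda^{(p)}(Q,H)=\max_{\|\mathbf x\|_p=1}P_{Q,H}(\mathbf x)$. A hereditary property $\mathcal P$ of $r$-graphs is a family of $r$-graphs closed under isomorphism and under taking induced subgraphs; as a standing assumption, whenever $H\in\mathcal P$, the disjoint union of $H$ with an isolated vertex is also in $\mathcal P$. $\mathcal P_n$ is the set of members of $\mathcal P$ with $n$ vertices. $ex(Q,\mathcal P_n)=\max\{\mathcal N(Q,H):H\in\mathcal P_n\}$ and $\pi(Q,\mathcal P)=\lim_{n\to\infty}ex(Q,\mathcal P_n)/\binom ns$ (this limit exists). $\lambda^{(p)}(Q,\mathcal P_n)=\max\{\lambda^{(p)}(Q,H):H\in\mathcal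 P_n\}$ and $\lambda^{(p)}(Q,\mathcal P)=\lim_{n\to\infty}\lambda^{(p)}(Q,\mathcal P_n)n^{s/p-s}$ (this limit exists). *)

theory Defs
  imports "HOL-Analysis.Analysis"
begin

text \<open>An r-graph with vertices in nat: a pair (V, E) of a finite vertex set and a set
  of edges, each an r-element subset of V.\<close>
type_synonym hgraph = "nat set \<times> nat set set"

definition is_rgraph :: "nat \<Rightarrow> hgraph \<Rightarrow> bool" where
  "is_rgraph r H \<longleftrightarrow> finite (fst H) \<and> (\<forall>e\<in>snd H. e \<subseteq> fst H \<and> card e = r)"

definition hg_iso :: "hgraph \<Rightarrow> hgraph \<Rightarrow> bool" where
  "hg_iso G H \<longleftrightarrow> (\<exists>f. bij_betw f (fst G) (fst H) \<and> snd H = (\<lambda>e. f ` e) ` snd G)"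

definition induced :: "hgraph \<Rightarrow> nat set \<Rightarrow> hgraph" where
  "induced H I = (I, {e \<in> snd H. e \<subseteq> I})"

definition subgraph :: "hgraph \<Rightarrow> hgraph \<Rightarrow> bool" where
  "subgraph F H \<longleftrightarrow> fst F \<subseteq> fst H \<and> snd F \<subseteq> snd H \<and> (\<forall>e\<in>snd F. e \<subseteq> fst F)"

definition num_copies :: "hgraph \<Rightarrow> hgraph \<Rightarrow> nat" where
  "num_copies Q H = card {F. subgraph F H \<and> hg_iso F Q}"

definition lagr_poly :: "hgraph \<Rightarrow> hgraph \<Rightarrow> (nat \<Rightarrow> real) \<Rightarrow> real" where
  "lagr_poly Q H x = fact (card (fst Q)) *
     (\<Sum>I\<in>{I. I \<subseteq> fst H \<and> card I = card (fst Q)}.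
        real (num_copies Q (induced H I)) * (\<Prod>i\<in>I. x i))"

definition pnorm :: "real \<Rightarrow> nat set \<Rightarrow> (nat \<Rightarrow> real) \<Rightarrow> real" where
  "pnorm p V x = (\<Sum>i\<in>V. \<bar>x i\<bar> powr p) powr (1 / p)"

definition lam :: "real \<Rightarrow> hgraph \<Rightarrow> hgraph \<Rightarrow> real" where
  "lam p Q H = Sup {lagr_poly Q H x | x. pnorm p (fst H) x = 1}"

definition hereditary :: "nat \<Rightarrow> hgraph set \<Rightarrow> bool" where
  "hereditary r P \<longleftrightarrow>
     (\<forall>H\<in>P. is_rgraph r H) \<and>
     (\<forall>G H. H \<in> P \<longrightarrow> hg_iso H G \<longrightarrow> G \<in> P) \<and>
     (\<forall>H I. H \<in> P \<longrightarrow> I \<subseteq> fst H \<longrightarrow> induced H I \<in> P) \<and>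
     (\<forall>H v. H \<in> P \<longrightarrow> v \<notin> fst H \<longrightarrow> (insert v (fst H), snd H) \<in> P)"

text \<open>P_n: members of P on the vertex set [n] (represented as {0..<n}).\<close>
definition Pn :: "hgraph set \<Rightarrow> nat \<Rightarrow> hgraph set" where
  "Pn P n = {H \<in> P. fst H = {0..<n}}"

definition ex_num :: "hgraph \<Rightarrow> hgraph set \<Rightarrow> nat \<Rightarrow> nat" where
  "ex_num Q P n = Max (num_copies Q ` Pn P n)"

definition pi_dens :: "hgraph \<Rightarrow> hgraph set \<Rightarrow> real" where
  "pi_dens Q P = lim (\<lambda>n. real (ex_num Q P n) / real (n choose card (fst Q)))"

definition lam_n :: "real \<Rightarrow> hgraph \<Rightarrow> hgraph set \<Rightarrow> nat \<Rightarrow> real" where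
  "lam_n p Q P n = Sup (lam p Q ` Pn P n)"

definition lam_prop :: "real \<Rightarrow> hgraph \<Rightarrow> hgraph set \<Rightarrow> real" where
  "lam_prop p Q P = lim (\<lambda>n. lam_n p Q P n * real n powr (real (card (fst Q)) / p - real (card (fst Q))))"

end

theory Submission
  imports Defs
begin


definition copies :: "hgraph \<Rightarrow> hgraph \<Rightarrow> hgraph set" where
  "copies Q H = {F. subgraph F H \<and> hg_iso F Q}"

lemma num_copies_copies: "num_copies Q H = card (copies Q H)"
  by (simp add: num_copies_def copies_def)

lemma copies_card:
  assumes "F \<in> copies Q H" "finite (fst Q)"
  shows "card (fst F) = card (fst Q) \<and> finite (fst F)"
proof -
  from assms obtain f where "bij_betw f (fst F) (fst Q)"
    by (auto simp: copies_def hg_iso_def)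
  then show ?thesis using assms(2) bij_betw_same_card bij_betw_finite by blast
qed

lemma copies_induced: "I \<subseteq> fst H \<Longrightarrow> copies Q (induced H I) = {F \<in> copies Q H. fst F \<subseteq> I}"
  unfolding copies_def subgraph_def induced_def by (auto; meson subset_iff)

lemma finite_copies:
  assumes "finite (fst H)"
  shows "finite (copies Q H)"
proof -
  have "copies Q H \<subseteq> Pow (fst H) \<times> Pow (Pow (fst H))"
  proof
    fix F assume "F \<in> copies Q H"
    then have h: "fst F \<subseteq> fst H" "\<forall>e\<in>snd F. e \<subseteq> fst F" by (auto simp: copies_def subgraph_def)
    then have "snd F \<subseteq> Pow (fst H)" by (meson PowI subset_iff)
    with h(1) show "F \<in> Pow (fst H) \<times> Pow (Pow (fst H))" by (simp add: mem_Times_iff)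
  qed
  then show ?thesis using assms by (meson finite_Pow_iff finite_SigmaI finite_subset)
qed

lemma num_copies_mono:
  assumes "I \<subseteq> J" "J \<subseteq> fst H" "finite (fst H)"
  shows "num_copies Q (induced H I) \<le> num_copies Q (induced H J)"
proof -
  have "copies Q (induced H I) \<subseteq> copies Q (induced H J)"
    using assms copies_induced[of I H Q] copies_induced[of J H Q] by auto
  moreover have "finite (copies Q (induced H J))"
    using assms by (intro finite_copies) (auto simp: induced_def intro: finite_subset)
  ultimately show ?thesis unfolding num_copies_copies by (rule card_mono[rotated])
qed

lemma induced_induced: "I \<subseteq> S \<Longrightarrow> induced (induced H S) I = induced H I"
  by (auto simp: induced_def)

lemma supersets_card:
  assumes "finite V" "A \<subseteq> V" "card A \<le> m"
  shows "card {S. S \<subseteq> V \<and> card S = m \<and> A \<subseteq> S} = (card V - card A) choose (m - card A)"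
proof -
  have fA: "finite A" using assms finite_subset by blast
  have "bij_betw (\<lambda>S. S - A) {S. S \<subseteq> V \<and> card S = m \<and> A \<subseteq> S} {T. T \<subseteq> V - A \<and> card T = m - card A}"
  proof (rule bij_betw_byWitness[where f'="\<lambda>T. T \<union> A"])
    show "\<forall>S\<in>{S. S \<subseteq> V \<and> card S = m \<and> A \<subseteq> S}. S - A \<union> A = S" by auto
    show "\<forall>T\<in>{T. T \<subseteq> V - A \<and> card T = m - card A}. T \<union> A - A = T" by auto
    show "(\<lambda>S. S - A) ` {S. S \<subseteq> V \<and> card S = m \<and> A \<subseteq> S} \<subseteq> {T. T \<subseteq> V - A \<and> card T = m - card A}"
      using assms(1) fA by (auto simp: card_Diff_subset intro: finite_subset)
    show "(\<lambda>T. T \<union> A) ` {T. T \<subseteq> V - A \<and> card T = m - card A} \<subseteq> {S. S \<subseteq> V \<and> card S = m \<and> A \<subseteq> S}"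
    proof safe
      fix T assume T: "T \<subseteq> V - A" "card T = m - card A"
      have "finite T" using T assms(1) finite_subset by blast
      then have "card (T \<union> A) = card T + card A" using T fA by (subst card_Un_disjoint) auto
      then show "card (T \<union> A) = m" using T assms(3) by simp
    qed (use assms in auto)
  qed
  then have "card {S. S \<subseteq> V \<and> card S = m \<and> A \<subseteq> S} = card {T. T \<subseteq> V - A \<and> card T = m - card A}"
    by (rule bij_betw_same_card)
  also have "\<dots> = card (V - A) choose (m - card A)"
    using assms by (simp add: n_subsets)
  also have "card (V - A) = card V - card A" using assms fA by (simp add: card_Diff_subset)
  finally show ?thesis .
qed

lemma card_filter_sum: "finite A \<Longrightarrow> card {x\<in>A. P x} = (\<Sum>x\<in>A. if P x then 1 else (0::nat))"
proof -
  assume "finite A"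
  then have "(\<Sum>x\<in>{x\<in>A. P x}. (1::nat)) = (\<Sum>x\<in>A. if P x then 1 else 0)"
    by (rule sum.inter_filter)
  then show ?thesis by simp
qed

lemma double_count:
  assumes "finite (fst H)" "finite (fst Q)" "card (fst Q) \<le> m"
  shows "(\<Sum>S\<in>{S. S \<subseteq> fst H \<and> card S = m}. num_copies Q (induced H S))
         = ((card (fst H) - card (fst Q)) choose (m - card (fst Q))) * num_copies Q H"
proof -
  let ?C = "copies Q H" and ?SS = "{S. S \<subseteq> fst H \<and> card S = m}"
  have fSS: "finite ?SS" using assms(1) by simp
  have fC: "finite ?C" using assms(1) finite_copies by blast
  have "(\<Sum>S\<in>?SS. num_copies Q (induced H S)) = (\<Sum>S\<in>?SS. \<Sum>F\<in>?C. if fst F \<subseteq> S then 1 else 0)"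
    unfolding num_copies_copies
  proof (rule sum.cong)
    fix S assume "S \<in> ?SS"
    then have "copies Q (induced H S) = {F \<in> ?C. fst F \<subseteq> S}" by (simp add: copies_induced)
    then show "card (copies Q (induced H S)) = (\<Sum>F\<in>?C. if fst F \<subseteq> S then 1 else 0)"
      using card_filter_sum[OF fC] by simp
  qed simp
  also have "\<dots> = (\<Sum>F\<in>?C. \<Sum>S\<in>?SS. if fst F \<subseteq> S then 1 else 0)"
    by (rule sum.swap)
  also have "\<dots> = (\<Sum>F\<in>?C. ((card (fst H) - card (fst Q)) choose (m - card (fst Q))))"
  proof (rule sum.cong)
    fix F assume F: "F \<in> ?C"
    have sub: "fst F \<subseteq> fst H" using F by (auto simp: copies_def subgraph_def)
    have cF: "card (fst F) = card (fst Q)" using copies_card[OF F assms(2)] by simp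
    have "(\<Sum>S\<in>?SS. if fst F \<subseteq> S then 1 else 0) = card {S \<in> ?SS. fst F \<subseteq> S}"
      using card_filter_sum[OF fSS] by simp
    also have "{S \<in> ?SS. fst F \<subseteq> S} = {S. S \<subseteq> fst H \<and> card S = m \<and> fst F \<subseteq> S}" by auto
    also have "card \<dots> = (card (fst H) - card (fst F)) choose (m - card (fst F))"
      using supersets_card[OF assms(1) sub] cF assms(3) by simp
    finally show "(\<Sum>S\<in>?SS. if fst F \<subseteq> S then 1 else 0) = ((card (fst H) - card (fst Q)) choose (m - card (fst Q)))"
      using cF by simp
  qed simp
  also have "\<dots> = ((card (fst H) - card (fst Q)) choose (m - card (fst Q))) * num_copies Q H"
    by (simp add: num_copies_copies)
  finally show ?thesis .
qed

lemma double_count_s: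
  assumes "finite (fst H)" "finite (fst Q)"
  shows "(\<Sum>S\<in>{S. S \<subseteq> fst H \<and> card S = card (fst Q)}. num_copies Q (induced H S)) = num_copies Q H"
  using double_count[OF assms, of "card (fst Q)"] by simp

lemma iso_image:
  assumes "hg_iso F Q" "inj_on h (fst F)" "\<forall>e\<in>snd F. e \<subseteq> fst F"
  shows "hg_iso (h ` fst F, image h ` snd F) Q"
proof -
  from assms(1) obtain g where g: "bij_betw g (fst F) (fst Q)" "snd Q = image g ` snd F"
    by (auto simp: hg_iso_def)
  let ?k = "g \<circ> inv_into (fst F) h"
  have b1: "bij_betw (inv_into (fst F) h) (h ` fst F) (fst F)"
    using assms(2) by (simp add: bij_betw_inv_into inj_on_imp_bij_betw)
  have bk: "bij_betw ?k (h ` fst F) (fst Q)" using b1 g(1) by (rule bij_betw_trans)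
  have eqk: "image ?k ` (image h ` snd F) = image g ` snd F"
  proof -
    have "?k ` (h ` e) = g ` e" if "e \<in> snd F" for e
    proof -
      have "e \<subseteq> fst F" using assms(3) that by blast
      then show ?thesis using assms(2) by (force simp: image_comp inv_into_f_f subset_iff)
    qed
    then show ?thesis by (force simp: image_comp)
  qed
  have "snd Q = image ?k ` (image h ` snd F)" using g(2) eqk by simp
  then show ?thesis unfolding hg_iso_def fst_conv snd_conv using bk by blast
qed

lemma num_copies_le_image:
  assumes "inj_on f (fst H)" "finite (fst H)" "\<forall>e\<in>snd H. e \<subseteq> fst H"
  shows "num_copies Q H \<le> num_copies Q (f ` fst H, image f ` snd H)"
proof -
  let ?H' = "(f ` fst H, image f ` snd H)"
  let ?phi = "\<lambda>F. (f ` fst F, image f ` snd F)"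
  have im: "?phi ` copies Q H \<subseteq> copies Q ?H'"
  proof
    fix G assume "G \<in> ?phi ` copies Q H"
    then obtain F where F: "F \<in> copies Q H" "G = ?phi F" by blast
    have sg: "subgraph F H" "hg_iso F Q" using F by (auto simp: copies_def)
    have sub: "fst F \<subseteq> fst H" "snd F \<subseteq> snd H" "\<forall>e\<in>snd F. e \<subseteq> fst F"
      using sg by (auto simp: subgraph_def)
    have "f ` fst F \<subseteq> f ` fst H" "image f ` snd F \<subseteq> image f ` snd H"
      using sub(1,2) by (auto intro: image_mono)
    moreover have "\<forall>e\<in>image f ` snd F. e \<subseteq> f ` fst F" using sub(3) by blast
    ultimately have "subgraph G ?H'" unfolding subgraph_def F(2) fst_conv snd_conv by blast
    moreover have "inj_on f (fst F)" using assms(1) sub(1) by (rule inj_on_subset)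
    then have "hg_iso G Q" using iso_image[OF sg(2) _ sub(3)] F(2) by simp
    ultimately show "G \<in> copies Q ?H'" by (simp add: copies_def)
  qed
  moreover have inj: "inj_on ?phi (copies Q H)"
  proof (rule inj_onI)
    fix F1 F2 assume F: "F1 \<in> copies Q H" "F2 \<in> copies Q H" "?phi F1 = ?phi F2"
    have s1: "fst F1 \<subseteq> fst H" "snd F1 \<subseteq> Pow (fst H)" using F(1) by (auto simp: copies_def subgraph_def)
    have s2: "fst F2 \<subseteq> fst H" "snd F2 \<subseteq> Pow (fst H)" using F(2) by (auto simp: copies_def subgraph_def)
    have e1: "f ` fst F1 = f ` fst F2" and e2: "image f ` snd F1 = image f ` snd F2" using F(3) by simp_all
    have "fst F1 = fst F2" using e1 inj_on_image_eq_iff[OF assms(1) s1(1) s2(1)] by blast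
    moreover have "snd F1 = snd F2"
      using e2 inj_on_image_eq_iff[OF inj_on_image_Pow[OF assms(1)] s1(2) s2(2)] by blast
    ultimately show "F1 = F2" by (simp add: prod_eq_iff)
  qed
  moreover have fin: "finite (copies Q ?H')" using assms(2) by (simp add: finite_copies)
  show ?thesis unfolding num_copies_copies by (rule card_inj_on_le[OF inj im fin])
qed



definition es :: "nat set \<Rightarrow> nat \<Rightarrow> (nat \<Rightarrow> real) \<Rightarrow> real" where
  "es V k z = (\<Sum>I\<in>{I. I \<subseteq> V \<and> card I = k}. \<Prod>i\<in>I. z i)"

lemma es_mono_set:
  assumes "finite V" "W \<subseteq> V" "\<forall>i\<in>V. z i \<ge> 0"
  shows "es W k z \<le> es V k z"
proof -
  have a: "finite {I. I \<subseteq> V \<and> card I = k}" using assms(1) by simp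
  have b: "{I. I \<subseteq> W \<and> card I = k} \<subseteq> {I. I \<subseteq> V \<and> card I = k}" using assms(2) by auto
  have c: "0 \<le> (\<Prod>i\<in>I. z i)" if "I \<in> {I. I \<subseteq> V \<and> card I = k} - {I. I \<subseteq> W \<and> card I = k}" for I
  proof -
    from that have "I \<subseteq> V" by auto
    then show ?thesis using assms(3) by (intro prod_nonneg) auto
  qed
  show ?thesis unfolding es_def by (rule sum_mono2[OF a b c])
qed

lemma es_zero: assumes "finite V" shows "es V 0 z = 1"
proof -
  from assms have "\<forall>I. I \<subseteq> V \<longrightarrow> card I = 0 \<longrightarrow> I = {}" by (metis card_0_eq finite_subset)
  then have "{I. I \<subseteq> V \<and> card I = 0} = {{}}" by auto
  then show ?thesis by (simp add: es_def)
qed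

lemma es_Suc:
  assumes "finite V"
  shows "real (Suc k) * es V (Suc k) z = (\<Sum>i\<in>V. z i * es (V - {i}) k z)"
proof -
  let ?A = "{I. I \<subseteq> V \<and> card I = Suc k}"
  let ?B = "\<lambda>i. {J. J \<subseteq> V - {i} \<and> card J = k}"
  let ?g = "\<lambda>(I, i). z i * (\<Prod>j\<in>I - {i}. z j)"
  have fA: "finite ?A" using assms by simp
  have "real (Suc k) * es V (Suc k) z = (\<Sum>I\<in>?A. real (Suc k) * (\<Prod>i\<in>I. z i))"
    by (simp add: es_def sum_distrib_left)
  also have "\<dots> = (\<Sum>I\<in>?A. \<Sum>i\<in>I. z i * (\<Prod>j\<in>I - {i}. z j))"
  proof (rule sum.cong)
    fix I assume I: "I \<in> ?A"
    then have fI: "finite I" using assms finite_subset by blast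
    have "(\<Sum>i\<in>I. z i * (\<Prod>j\<in>I - {i}. z j)) = (\<Sum>i\<in>I. (\<Prod>j\<in>I. z j))"
      using fI by (intro sum.cong) (auto simp: prod.remove)
    also have "\<dots> = real (Suc k) * (\<Prod>i\<in>I. z i)" using I by simp
    finally show "real (Suc k) * (\<Prod>i\<in>I. z i) = (\<Sum>i\<in>I. z i * (\<Prod>j\<in>I - {i}. z j))" by simp
  qed simp
  also have "\<dots> = (\<Sum>p\<in>Sigma ?A (\<lambda>I. I). ?g p)"
    using fA assms by (subst sum.Sigma) (auto intro: finite_subset)
  also have "\<dots> = (\<Sum>p\<in>Sigma V ?B. ?g ((\<lambda>(i, J). (insert i J, i)) p))"
  proof (rule sum.reindex_bij_betw[symmetric])
    show "bij_betw (\<lambda>(i, J). (insert i J, i)) (Sigma V ?B) (Sigma ?A (\<lambda>I. I))"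
    proof (rule bij_betw_byWitness[where f'="\<lambda>(I, i). (i, I - {i})"])
      show "\<forall>a\<in>Sigma V ?B. (\<lambda>(I, i). (i, I - {i})) ((\<lambda>(i, J). (insert i J, i)) a) = a" by auto
      show "\<forall>a\<in>Sigma ?A (\<lambda>I. I). (\<lambda>(i, J). (insert i J, i)) ((\<lambda>(I, i). (i, I - {i})) a) = a" by auto
      show "(\<lambda>(i, J). (insert i J, i)) ` Sigma V ?B \<subseteq> Sigma ?A (\<lambda>I. I)"
      proof (rule subsetI)
        fix pp assume "pp \<in> (\<lambda>(i, J). (insert i J, i)) ` Sigma V ?B"
        then obtain i J where pp: "pp = (insert i J, i)" "i \<in> V" "J \<subseteq> V - {i}" "card J = k" by auto
        moreover have "finite J" using pp(3) assms finite_subset by blast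
        moreover have "i \<notin> J" using pp(3) by blast
        ultimately show "pp \<in> Sigma ?A (\<lambda>I. I)" by auto
      qed
      show "(\<lambda>(I, i). (i, I - {i})) ` Sigma ?A (\<lambda>I. I) \<subseteq> Sigma V ?B"
      proof (rule subsetI)
        fix pp assume "pp \<in> (\<lambda>(I, i). (i, I - {i})) ` Sigma ?A (\<lambda>I. I)"
        then obtain I i where pp: "pp = (i, I - {i})" "I \<subseteq> V" "card I = Suc k" "i \<in> I" by auto
        moreover have "finite I" using pp(2) assms finite_subset by blast
        ultimately show "pp \<in> Sigma V ?B" by auto
      qed
    qed
  qed
  also have "\<dots> = (\<Sum>i\<in>V. \<Sum>J\<in>?B i. z i * (\<Prod>j\<in>J. z j))"
  proof -
    have "(\<Sum>p\<in>Sigma V ?B. ?g ((\<lambda>(i, J). (insert i J, i)) p)) = (\<Sum>p\<in>Sigma V ?B. (\<lambda>(i,J). z i * (\<Prod>j\<in>J. z j)) p)"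
    proof (rule sum.cong)
      fix p assume "p \<in> Sigma V ?B"
      then obtain i J where p: "p = (i, J)" "i \<notin> J" by auto
      then show "?g ((\<lambda>(i, J). (insert i J, i)) p) = (\<lambda>(i,J). z i * (\<Prod>j\<in>J. z j)) p"
        by (simp add: insert_Diff_if)
    qed simp
    also have "\<dots> = (\<Sum>i\<in>V. \<Sum>J\<in>?B i. z i * (\<Prod>j\<in>J. z j))"
      using assms by (subst sum.Sigma) auto
    finally show ?thesis .
  qed
  also have "\<dots> = (\<Sum>i\<in>V. z i * es (V - {i}) k z)"
    by (simp add: es_def sum_distrib_left)
  finally show ?thesis .
qed

lemma es_bound:
  assumes "finite V" "\<forall>i\<in>V. z i \<ge> 0"
  shows "fact k * es V k z \<le> (\<Sum>i\<in>V. z i) ^ k"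
proof (induction k)
  case 0
  then show ?case using assms by (simp add: es_zero)
next
  case (Suc k)
  have "fact (Suc k) * es V (Suc k) z = fact k * (real (Suc k) * es V (Suc k) z)"
    by (simp add: algebra_simps)
  also have "\<dots> = fact k * (\<Sum>i\<in>V. z i * es (V - {i}) k z)"
    using es_Suc[OF assms(1)] by simp
  also have "\<dots> \<le> fact k * (\<Sum>i\<in>V. z i * es V k z)"
  proof -
    have "(\<Sum>i\<in>V. z i * es (V - {i}) k z) \<le> (\<Sum>i\<in>V. z i * es V k z)"
      using assms by (intro sum_mono mult_left_mono es_mono_set) auto
    then show ?thesis by (simp add: mult_left_mono)
  qed
  also have "\<dots> = (\<Sum>i\<in>V. z i) * (fact k * es V k z)"
    by (simp add: sum_distrib_right algebra_simps)
  also have "\<dots> \<le> (\<Sum>i\<in>V. z i) * (\<Sum>i\<in>V. z i) ^ k"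
    using Suc.IH assms by (intro mult_left_mono sum_nonneg) auto
  finally show ?case by simp
qed

lemma prod_split_point:
  fixes y :: "nat \<Rightarrow> real"
  assumes "finite I"
  shows "(\<Prod>i\<in>I. y i) = (1 - y u) * (\<Prod>i\<in>I. (y(u := 0)) i) + y u * (\<Prod>i\<in>I. (y(u := 1)) i)"
proof (cases "u \<in> I")
  case True
  have e0: "(\<Prod>i\<in>I - {u}. (y(u := 0)) i) = (\<Prod>i\<in>I - {u}. y i)"
    and e1: "(\<Prod>i\<in>I - {u}. (y(u := 1)) i) = (\<Prod>i\<in>I - {u}. y i)"
    by (auto intro: prod.cong)
  have r: "prod y I = y u * prod y (I - {u})" "prod (y(u := 0)) I = 0 * prod y (I - {u})"
     "prod (y(u := 1)) I = 1 * prod y (I - {u})"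
    using True assms by (simp_all add: prod.remove[of I u] e0 e1)
  show ?thesis unfolding r by (simp add: algebra_simps)
next
  case False
  then have "(\<Prod>i\<in>I. (y(u := 0)) i) = (\<Prod>i\<in>I. y i)" "(\<Prod>i\<in>I. (y(u := 1)) i) = (\<Prod>i\<in>I. y i)"
    by (auto intro: prod.cong)
  then show ?thesis by (simp add: algebra_simps)
qed

lemma multilin:
  fixes a :: "nat set \<Rightarrow> real" and FF :: "nat set set"
  assumes "\<forall>I\<in>FF. finite I" "finite U" "\<forall>i\<in>U. 0 \<le> q i \<and> q i \<le> 1"
  shows "\<exists>y. (\<forall>i\<in>U. y i = 0 \<or> y i = 1) \<and> (\<forall>i. i \<notin> U \<longrightarrow> y i = q i) \<and>
          (\<Sum>I\<in>FF. a I * (\<Prod>i\<in>I. q i)) \<le> (\<Sum>I\<in>FF. a I * (\<Prod>i\<in>I. y i))"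
  using assms(2,3)
proof (induction U arbitrary: q rule: finite_induct)
  case empty
  then show ?case by (intro exI[of _ q]) auto
next
  case (insert u U)
  let ?f = "\<lambda>y. (\<Sum>I\<in>FF. a I * (\<Prod>i\<in>I. y i))"
  obtain y where y: "\<forall>i\<in>U. y i = 0 \<or> y i = 1" "\<forall>i. i \<notin> U \<longrightarrow> y i = q i" "?f q \<le> ?f y"
    using insert.IH[of q] insert.prems by auto
  have yu: "y u = q u" "0 \<le> q u" "q u \<le> 1" using y(2) insert.hyps insert.prems by auto
  have split: "?f y = (1 - y u) * ?f (y(u := 0)) + y u * ?f (y(u := 1))"
  proof -
    have "?f y = (\<Sum>I\<in>FF. (1 - y u) * (a I * (\<Prod>i\<in>I. (y(u := 0)) i)) + y u * (a I * (\<Prod>i\<in>I. (y(u := 1)) i)))"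
      using assms(1) by (intro sum.cong refl) (simp add: prod_split_point[of _ y u] algebra_simps)
    also have "\<dots> = (1 - y u) * ?f (y(u := 0)) + y u * ?f (y(u := 1))"
      by (simp add: sum.distrib sum_distrib_left)
    finally show ?thesis .
  qed
  show ?case
  proof (cases "?f (y(u := 0)) \<le> ?f (y(u := 1))")
    case True
    have "?f y \<le> (1 - y u) * ?f (y(u := 1)) + y u * ?f (y(u := 1))"
      using split True yu by (simp add: mult_left_mono)
    then have "?f y \<le> ?f (y(u := 1))" by (simp add: algebra_simps)
    then show ?thesis using y insert.hyps
      by (intro exI[of _ "y(u := 1)"]) auto
  next
    case False
    have "?f y \<le> (1 - y u) * ?f (y(u := 0)) + y u * ?f (y(u := 0))"
      using split False yu by (simp add: mult_left_mono)
    then have "?f y \<le> ?f (y(u := 0))" by (simp add: algebra_simps)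
    then show ?thesis using y insert.hyps
      by (intro exI[of _ "y(u := 0)"]) auto
  qed
qed

lemma young_term:
  fixes n p y :: real
  assumes "p \<ge> 1" "n > 0" "y \<ge> 0"
  shows "n powr (1/p) * y \<le> n * y powr p / p + (1 - 1/p)"
proof (cases "y = 0")
  case True
  then show ?thesis using assms by (simp add: divide_le_eq_1)
next
  case False
  then have ypos: "y > 0" using assms by simp
  have "(n * y powr p) powr (1/p) * 1 powr (1 - 1/p) \<le> (1/p) * (n * y powr p) + (1 - 1/p) * 1"
    using assms ypos by (intro Youngs_inequality_0) auto
  moreover have "(n * y powr p) powr (1/p) = n powr (1/p) * y"
    using assms ypos by (simp add: powr_mult powr_powr)
  ultimately show ?thesis by simp
qed

lemma holder1:
  fixes x :: "nat \<Rightarrow> real" and p :: real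
  assumes "p \<ge> 1" "finite V" "V \<noteq> {}" "(\<Sum>i\<in>V. \<bar>x i\<bar> powr p) = 1"
  shows "(\<Sum>i\<in>V. \<bar>x i\<bar>) \<le> real (card V) powr (1 - 1/p)"
proof -
  let ?n = "real (card V)"
  have n: "?n > 0" using assms by (simp add: card_gt_0_iff)
  have "?n powr (1/p) * (\<Sum>i\<in>V. \<bar>x i\<bar>) = (\<Sum>i\<in>V. ?n powr (1/p) * \<bar>x i\<bar>)"
    by (simp add: sum_distrib_left)
  also have "\<dots> \<le> (\<Sum>i\<in>V. ?n * \<bar>x i\<bar> powr p / p + (1 - 1/p))"
    using assms n by (intro sum_mono young_term) auto
  also have "\<dots> = ?n / p * (\<Sum>i\<in>V. \<bar>x i\<bar> powr p) + ?n * (1 - 1/p)"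
    by (simp add: sum.distrib sum_distrib_left sum_divide_distrib)
  also have "\<dots> = ?n" using assms by (simp add: algebra_simps)
  finally have "?n powr (1/p) * (\<Sum>i\<in>V. \<bar>x i\<bar>) \<le> ?n" .
  then have "(\<Sum>i\<in>V. \<bar>x i\<bar>) \<le> ?n / ?n powr (1/p)"
    using n by (simp add: le_divide_eq mult.commute)
  also have "?n / ?n powr (1/p) = ?n powr (1 - 1/p)"
    using n by (simp add: powr_diff)
  finally show ?thesis .
qed

lemma pnorm_sum:
  assumes "p \<ge> 1" "pnorm p V x = 1"
  shows "(\<Sum>i\<in>V. \<bar>x i\<bar> powr p) = 1"
proof -
  let ?S = "(\<Sum>i\<in>V. \<bar>x i\<bar> powr p)"
  have S0: "?S \<ge> 0" by (intro sum_nonneg) auto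
  have "?S powr (1/p) = 1" using assms by (simp add: pnorm_def)
  then have "?S \<noteq> 0" by auto
  have "?S = (?S powr (1/p)) powr p" using S0 assms by (simp add: powr_powr)
  also have "\<dots> = 1" using \<open>?S powr (1/p) = 1\<close> by simp
  finally show ?thesis .
qed

lemma pnorm_abs_le1:
  fixes x :: "nat \<Rightarrow> real" and p :: real
  assumes "p \<ge> 1" "finite V" "(\<Sum>i\<in>V. \<bar>x i\<bar> powr p) = 1" "j \<in> V"
  shows "\<bar>x j\<bar> \<le> 1"
proof (rule ccontr)
  assume "\<not> \<bar>x j\<bar> \<le> 1"
  then have "1 powr p < \<bar>x j\<bar> powr p" using powr_less_mono2[of p 1 "\<bar>x j\<bar>"] assms by auto
  moreover have "\<bar>x j\<bar> powr p \<le> (\<Sum>i\<in>V. \<bar>x i\<bar> powr p)"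
    using assms by (intro member_le_sum) auto
  ultimately show False using assms by simp
qed

context
  fixes r :: nat and Q :: hgraph and P :: "hgraph set"
  assumes her: "hereditary r P" and Pne: "P \<noteq> {}" and Qr: "is_rgraph r Q"
begin

lemma finQ: "finite (fst Q)" using Qr by (simp add: is_rgraph_def)

lemma P_rg: "H \<in> P \<Longrightarrow> is_rgraph r H" using her by (simp add: hereditary_def)

lemma P_fin: "H \<in> P \<Longrightarrow> finite (fst H)" using P_rg by (simp add: is_rgraph_def)

lemma P_edges: "H \<in> P \<Longrightarrow> \<forall>e\<in>snd H. e \<subseteq> fst H" using P_rg by (simp add: is_rgraph_def)

lemma P_induced: "H \<in> P \<Longrightarrow> I \<subseteq> fst H \<Longrightarrow> induced H I \<in> P"
  using her unfolding hereditary_def by blast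

lemma P_iso: "H \<in> P \<Longrightarrow> hg_iso H G \<Longrightarrow> G \<in> P"
  using her unfolding hereditary_def by blast

lemma P_insert: "H \<in> P \<Longrightarrow> v \<notin> fst H \<Longrightarrow> (insert v (fst H), snd H) \<in> P"
  using her unfolding hereditary_def by blast

lemma Pn_finite: "finite (Pn P n)"
proof -
  have "Pn P n \<subseteq> {{0..<n}} \<times> Pow (Pow {0..<n})"
  proof
    fix H assume H: "H \<in> Pn P n"
    then have "H \<in> P" "fst H = {0..<n}" by (auto simp: Pn_def)
    then have "snd H \<subseteq> Pow {0..<n}" using P_edges by blast
    then show "H \<in> {{0..<n}} \<times> Pow (Pow {0..<n})" using \<open>fst H = {0..<n}\<close> by (simp add: mem_Times_iff)
  qed
  then show ?thesis by (rule finite_subset) auto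
qed

lemma Pn_nonempty: "Pn P n \<noteq> {}"
proof -
  obtain H where H: "H \<in> P" using Pne by blast
  let ?E = "{e \<in> snd H. e \<subseteq> {}}"
  have "({}, ?E) \<in> P" using P_induced[OF H, of "{}"] by (simp add: induced_def)
  then have "({0..<n}, ?E) \<in> P"
  proof (induction n)
    case 0 then show ?case by simp
  next
    case (Suc n)
    then have "(insert n (fst ({0..<n}, ?E)), snd ({0..<n}, ?E)) \<in> P" by (intro P_insert) auto
    then show ?case by (simp add: atLeast0_lessThan_Suc)
  qed
  then show ?thesis by (auto simp: Pn_def)
qed

lemma ex_upper: "H \<in> Pn P n \<Longrightarrow> num_copies Q H \<le> ex_num Q P n"
  unfolding ex_num_def using Pn_finite by (intro Max_ge) auto

lemma ex_attained: "\<exists>H\<in>Pn P n. num_copies Q H = ex_num Q P n"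
proof -
  have "ex_num Q P n \<in> num_copies Q ` Pn P n"
    unfolding ex_num_def using Pn_finite Pn_nonempty by (intro Max_in) auto
  then show ?thesis by auto
qed

lemma N_le_ex:
  assumes H: "H \<in> P"
  shows "num_copies Q H \<le> ex_num Q P (card (fst H))"
proof -
  obtain f where f: "bij_betw f (fst H) {0..<card (fst H)}"
    using ex_bij_betw_finite_nat[OF P_fin[OF H]] by blast
  let ?H' = "(f ` fst H, image f ` snd H)"
  have "hg_iso H ?H'" unfolding hg_iso_def using f by (auto simp: bij_betw_def)
  then have "?H' \<in> P" using P_iso H by blast
  moreover have "fst ?H' = {0..<card (fst H)}" using f by (simp add: bij_betw_def)
  ultimately have "?H' \<in> Pn P (card (fst H))" by (simp add: Pn_def)
  then have "num_copies Q ?H' \<le> ex_num Q P (card (fst H))" by (rule ex_upper)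
  moreover have "num_copies Q H \<le> num_copies Q ?H'"
    using f P_fin[OF H] P_edges[OF H] by (intro num_copies_le_image) (auto simp: bij_betw_def)
  ultimately show ?thesis by linarith
qed

lemma ex_mono_bound:
  assumes "card (fst Q) \<le> m" "m \<le> k"
  shows "ex_num Q P k * (m choose card (fst Q)) \<le> ex_num Q P m * (k choose card (fst Q))"
proof -
  let ?s = "card (fst Q)"
  obtain H where H: "H \<in> Pn P k" "num_copies Q H = ex_num Q P k" using ex_attained by blast
  have HP: "H \<in> P" and V: "fst H = {0..<k}" using H by (auto simp: Pn_def)
  let ?SS = "{S. S \<subseteq> fst H \<and> card S = m}"
  have "((k - ?s) choose (m - ?s)) * ex_num Q P k = (\<Sum>S\<in>?SS. num_copies Q (induced H S))"
    using double_count[OF P_fin[OF HP] finQ assms(1)] H V by simp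
  also have "\<dots> \<le> (\<Sum>S\<in>?SS. ex_num Q P m)"
  proof (rule sum_mono)
    fix S assume S: "S \<in> ?SS"
    have "num_copies Q (induced H S) \<le> ex_num Q P (card (fst (induced H S)))"
      using S by (intro N_le_ex P_induced HP) auto
    then show "num_copies Q (induced H S) \<le> ex_num Q P m" using S by (simp add: induced_def)
  qed
  also have "\<dots> = (k choose m) * ex_num Q P m" using V by (simp add: n_subsets)
  finally have A: "((k - ?s) choose (m - ?s)) * ex_num Q P k \<le> (k choose m) * ex_num Q P m" .
  have "((k - ?s) choose (m - ?s)) * (ex_num Q P k * (m choose ?s))
        = (((k - ?s) choose (m - ?s)) * ex_num Q P k) * (m choose ?s)" by simp
  also have "\<dots> \<le> ((k choose m) * ex_num Q P m) * (m choose ?s)" using A by simp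
  also have "\<dots> = ((k choose m) * (m choose ?s)) * ex_num Q P m" by simp
  also have "\<dots> = ((k choose ?s) * ((k - ?s) choose (m - ?s))) * ex_num Q P m"
    using choose_mult[OF assms] by simp
  also have "\<dots> = ((k - ?s) choose (m - ?s)) * (ex_num Q P m * (k choose ?s))" by simp
  finally have B: "((k - ?s) choose (m - ?s)) * (ex_num Q P k * (m choose ?s))
       \<le> ((k - ?s) choose (m - ?s)) * (ex_num Q P m * (k choose ?s))" .
  have "((k - ?s) choose (m - ?s)) > 0" using assms by simp
  then show ?thesis using B by simp
qed

definition dd :: "nat \<Rightarrow> real" where
  "dd n = real (ex_num Q P n) / real (n choose card (fst Q))"

lemma dd_nonneg: "dd n \<ge> 0" by (simp add: dd_def)

lemma ex_le_dd:
  assumes "card (fst Q) \<le> m" "m \<le> k"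
  shows "real (ex_num Q P k) \<le> dd m * real (k choose card (fst Q))"
proof -
  have pos: "real (m choose card (fst Q)) > 0" using assms by simp
  have "real (ex_num Q P k) * real (m choose card (fst Q)) \<le> real (ex_num Q P m) * real (k choose card (fst Q))"
    using ex_mono_bound[OF assms] by (metis of_nat_le_iff of_nat_mult)
  then show ?thesis using pos unfolding dd_def by (simp add: field_simps)
qed

lemma dd_anti:
  assumes "card (fst Q) \<le> m" "m \<le> k"
  shows "dd k \<le> dd m"
proof -
  have pos: "real (k choose card (fst Q)) > 0" using assms by simp
  show ?thesis using ex_le_dd[OF assms] pos unfolding dd_def[of k] by (simp add: field_simps)
qed

lemma NS_bound:
  assumes H: "H \<in> Pn P n" and m: "card (fst Q) \<le> m" "m \<le> n" and S: "S \<subseteq> {0..<n}"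
  shows "real (num_copies Q (induced H S)) \<le> dd m * real (card S choose card (fst Q)) + real (ex_num Q P m)"
proof -
  have HP: "H \<in> P" and V: "fst H = {0..<n}" using H by (auto simp: Pn_def)
  have fS: "finite S" using S finite_subset by blast
  show ?thesis
  proof (cases "m \<le> card S")
    case True
    have "num_copies Q (induced H S) \<le> ex_num Q P (card (fst (induced H S)))"
      using S V by (intro N_le_ex P_induced HP) auto
    then have "real (num_copies Q (induced H S)) \<le> real (ex_num Q P (card S))" by (simp add: induced_def)
    also have "\<dots> \<le> dd m * real (card S choose card (fst Q))" using ex_le_dd[OF m(1) True] .
    finally show ?thesis by simp
  next
    case False
    have "m - card S \<le> card ({0..<n} - S)" using S m fS by (simp add: card_Diff_subset)
    then obtain T0 where T0: "T0 \<subseteq> {0..<n} - S" "card T0 = m - card S" "finite T0"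
      by (meson obtain_subset_with_card_n)
    let ?T = "S \<union> T0"
    have cT: "card ?T = m" using T0 fS False by (subst card_Un_disjoint) auto
    have TV: "?T \<subseteq> fst H" using T0 S V by auto
    have "num_copies Q (induced H S) \<le> num_copies Q (induced H ?T)"
      using TV P_fin[OF HP] by (intro num_copies_mono) auto
    also have "\<dots> \<le> ex_num Q P (card (fst (induced H ?T)))"
      using TV by (intro N_le_ex P_induced HP) auto
    also have "\<dots> = ex_num Q P m" using cT by (simp add: induced_def)
    finally have "real (num_copies Q (induced H S)) \<le> real (ex_num Q P m)" by simp
    moreover have "0 \<le> dd m * real (card S choose card (fst Q))" using dd_nonneg by simp
    ultimately show ?thesis by linarith
  qed
qed

lemma sum_induced_s:
  assumes H: "H \<in> P" and S: "S \<subseteq> fst H"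
  shows "(\<Sum>I\<in>{I. I \<subseteq> S \<and> card I = card (fst Q)}. num_copies Q (induced H I)) = num_copies Q (induced H S)"
proof -
  have fS: "finite S" using S P_fin[OF H] finite_subset by blast
  have "(\<Sum>I\<in>{I. I \<subseteq> S \<and> card I = card (fst Q)}. num_copies Q (induced H I))
      = (\<Sum>I\<in>{I. I \<subseteq> fst (induced H S) \<and> card I = card (fst Q)}. num_copies Q (induced (induced H S) I))"
  proof (rule sum.cong)
    have fi: "fst (induced H S) = S" by (simp add: induced_def)
    show "{I. I \<subseteq> S \<and> card I = card (fst Q)} = {I. I \<subseteq> fst (induced H S) \<and> card I = card (fst Q)}"
      unfolding fi ..
    fix I assume "I \<in> {I. I \<subseteq> fst (induced H S) \<and> card I = card (fst Q)}"
    then have "I \<subseteq> S" unfolding fi by simp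
    then show "num_copies Q (induced H I) = num_copies Q (induced (induced H S) I)"
      by (simp add: induced_induced)
  qed
  also have "\<dots> = num_copies Q (induced H S)"
    using fS finQ by (intro double_count_s) (auto simp: induced_def)
  finally show ?thesis .
qed

end
context
  fixes r :: nat and Q :: hgraph and P :: "hgraph set"
  assumes her: "hereditary r P" and Pne: "P \<noteq> {}" and Qr: "is_rgraph r Q"
begin

lemma lagr_bound:
  assumes H: "H \<in> Pn P n" and m: "card (fst Q) \<le> m" "m \<le> n" and p: "p \<ge> 1" and s1: "card (fst Q) \<ge> 1"
    and x: "pnorm p {0..<n} x = 1"
  shows "lagr_poly Q H x \<le> dd Q P m * real n powr (real (card (fst Q)) - real (card (fst Q)) / p)
            + fact (card (fst Q)) * real (ex_num Q P m)"
proof -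
  let ?s = "card (fst Q)"
  let ?V = "{0..<n}"
  let ?SS = "{I. I \<subseteq> ?V \<and> card I = ?s}"
  let ?N = "\<lambda>I. real (num_copies Q (induced H I))"
  let ?q = "\<lambda>i. \<bar>x i\<bar>"
  have HP: "H \<in> P" and V: "fst H = ?V" using H by (auto simp: Pn_def)
  have npos: "n > 0" using m s1 by linarith
  have sumx: "(\<Sum>i\<in>?V. \<bar>x i\<bar> powr p) = 1" using pnorm_sum[OF p x] .
  have le1: "\<forall>i\<in>?V. 0 \<le> ?q i \<and> ?q i \<le> 1" using pnorm_abs_le1[OF p _ sumx] by auto
  have fSS: "\<forall>I\<in>?SS. finite I" using finite_subset by blast
  have step1: "lagr_poly Q H x \<le> fact ?s * (\<Sum>I\<in>?SS. ?N I * (\<Prod>i\<in>I. ?q i))"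
  proof -
    have "(\<Sum>I\<in>?SS. ?N I * (\<Prod>i\<in>I. x i)) \<le> (\<Sum>I\<in>?SS. ?N I * (\<Prod>i\<in>I. ?q i))"
    proof (rule sum_mono)
      fix I
      have "(\<Prod>i\<in>I. x i) \<le> (\<Prod>i\<in>I. ?q i)" by (metis abs_ge_self abs_prod)
      then show "?N I * (\<Prod>i\<in>I. x i) \<le> ?N I * (\<Prod>i\<in>I. ?q i)" by (simp add: mult_left_mono)
    qed
    then show ?thesis unfolding lagr_poly_def V by (simp add: mult_left_mono)
  qed
  obtain y where y: "\<forall>i\<in>?V. y i = 0 \<or> y i = 1"
    "(\<Sum>I\<in>?SS. (?N I - dd Q P m) * (\<Prod>i\<in>I. ?q i)) \<le> (\<Sum>I\<in>?SS. (?N I - dd Q P m) * (\<Prod>i\<in>I. y i))"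
    using multilin[OF fSS _ le1, of "\<lambda>I. ?N I - dd Q P m"] by auto
  let ?S = "{i \<in> ?V. y i = 1}"
  have SV: "?S \<subseteq> ?V" by auto
  have prody: "(\<Prod>i\<in>I. y i) = (if I \<subseteq> ?S then 1 else 0)" if I: "I \<in> ?SS" for I
  proof (cases "I \<subseteq> ?S")
    case True
    then show ?thesis by (auto intro: prod.neutral)
  next
    case False
    then obtain j where j: "j \<in> I" "y j \<noteq> 1" using I by auto
    then have "y j = 0" using y(1) I by auto
    moreover have "finite I" using I finite_subset by blast
    ultimately show ?thesis using j False by (auto intro: prod_zero)
  qed
  have "(\<Sum>I\<in>?SS. (?N I - dd Q P m) * (\<Prod>i\<in>I. y i)) = (\<Sum>I\<in>?SS. if I \<subseteq> ?S then ?N I - dd Q P m else 0)"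
    by (intro sum.cong refl) (simp add: prody)
  also have "\<dots> = (\<Sum>I\<in>{I\<in>?SS. I \<subseteq> ?S}. ?N I - dd Q P m)"
    by (rule sum.inter_filter[symmetric]) simp
  also have "{I\<in>?SS. I \<subseteq> ?S} = {I. I \<subseteq> ?S \<and> card I = ?s}" using SV by auto
  also have "(\<Sum>I\<in>{I. I \<subseteq> ?S \<and> card I = ?s}. ?N I - dd Q P m)
      = real (num_copies Q (induced H ?S)) - dd Q P m * real (card ?S choose ?s)"
  proof -
    have fS: "finite ?S" by simp
    have nat_eq: "(\<Sum>I\<in>{I. I \<subseteq> ?S \<and> card I = ?s}. num_copies Q (induced H I)) = num_copies Q (induced H ?S)"
      by (rule sum_induced_s[OF her Pne Qr HP]) (use SV V in simp)
    have "(\<Sum>I\<in>{I. I \<subseteq> ?S \<and> card I = ?s}. ?N I) = real (\<Sum>I\<in>{I. I \<subseteq> ?S \<and> card I = ?s}. num_copies Q (induced H I))"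
      by (rule of_nat_sum[symmetric])
    also have "\<dots> = real (num_copies Q (induced H ?S))" by (simp only: nat_eq)
    finally have "(\<Sum>I\<in>{I. I \<subseteq> ?S \<and> card I = ?s}. ?N I) = real (num_copies Q (induced H ?S))" .
    moreover have "card {I. I \<subseteq> ?S \<and> card I = ?s} = card ?S choose ?s" using fS by (rule n_subsets)
    ultimately show ?thesis by (simp add: sum_subtractf)
  qed
  also have "\<dots> \<le> real (ex_num Q P m)"
    using NS_bound[OF her Pne Qr H m SV] by simp
  finally have A: "(\<Sum>I\<in>?SS. (?N I - dd Q P m) * (\<Prod>i\<in>I. ?q i)) \<le> real (ex_num Q P m)"
    using y(2) by linarith
  have B: "(\<Sum>I\<in>?SS. (?N I - dd Q P m) * (\<Prod>i\<in>I. ?q i))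
      = (\<Sum>I\<in>?SS. ?N I * (\<Prod>i\<in>I. ?q i)) - dd Q P m * es ?V ?s ?q"
    by (simp add: es_def left_diff_distrib sum_subtractf sum_distrib_left)
  have C: "(\<Sum>I\<in>?SS. ?N I * (\<Prod>i\<in>I. ?q i)) \<le> dd Q P m * es ?V ?s ?q + real (ex_num Q P m)"
    using A B by linarith
  have D: "fact ?s * es ?V ?s ?q \<le> (\<Sum>i\<in>?V. ?q i) ^ ?s"
    by (rule es_bound) auto
  have E: "(\<Sum>i\<in>?V. ?q i) ^ ?s \<le> (real n powr (1 - 1/p)) ^ ?s"
    using holder1[OF p _ _ sumx] npos by (intro power_mono sum_nonneg) auto
  have F: "(real n powr (1 - 1/p)) ^ ?s = real n powr (real ?s - real ?s / p)"
  proof -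
    have "(real n powr (1 - 1/p)) ^ ?s = (real n powr (1 - 1/p)) powr real ?s"
      using npos by (simp add: powr_realpow)
    also have "\<dots> = real n powr ((1 - 1/p) * real ?s)" by (simp add: powr_powr)
    also have "(1 - 1/p) * real ?s = real ?s - real ?s / p" by (simp add: algebra_simps)
    finally show ?thesis .
  qed
  have ddn: "dd Q P m \<ge> 0" by (rule dd_nonneg[OF her Pne Qr])
  have "lagr_poly Q H x \<le> fact ?s * (dd Q P m * es ?V ?s ?q + real (ex_num Q P m))"
    using step1 C by (meson fact_ge_zero mult_left_mono order_trans)
  also have "\<dots> = dd Q P m * (fact ?s * es ?V ?s ?q) + fact ?s * real (ex_num Q P m)"
    by (simp add: algebra_simps)
  also have "\<dots> \<le> dd Q P m * real n powr (real ?s - real ?s / p) + fact ?s * real (ex_num Q P m)"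
    using D E F ddn by (simp add: mult_left_mono)
  finally show ?thesis .
qed

lemma const_pnorm:
  assumes "n \<ge> 1" "p \<ge> 1"
  shows "pnorm p {0..<n} (\<lambda>_. real n powr (-1/p)) = 1"
proof -
  have np: "real n > 0" using assms by simp
  have "\<bar>real n powr (-1/p)\<bar> powr p = real n powr (-1)"
    using np assms by (simp add: powr_powr)
  then have "(\<Sum>i\<in>{0..<n}. \<bar>real n powr (-1/p)\<bar> powr p) = real n * (1 / real n)"
    using np by (simp add: powr_neg_one)
  also have "\<dots> = 1" using np by simp
  finally show ?thesis by (simp add: pnorm_def)
qed

definition BB :: "real \<Rightarrow> nat \<Rightarrow> nat \<Rightarrow> real" where
  "BB p n m = dd Q P m * real n powr (real (card (fst Q)) - real (card (fst Q)) / p)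
            + fact (card (fst Q)) * real (ex_num Q P m)"

lemma lam_le:
  assumes H: "H \<in> Pn P n" and m: "card (fst Q) \<le> m" "m \<le> n" and p: "p \<ge> 1" and s1: "card (fst Q) \<ge> 1"
  shows "lam p Q H \<le> BB p n m"
  unfolding lam_def
proof (rule cSup_least)
  have "n \<ge> 1" using m s1 by linarith
  then show "{lagr_poly Q H x |x. pnorm p (fst H) x = 1} \<noteq> {}"
    using const_pnorm[OF _ p] H by (auto simp: Pn_def)
  fix v assume "v \<in> {lagr_poly Q H x |x. pnorm p (fst H) x = 1}"
  then obtain x where "v = lagr_poly Q H x" "pnorm p {0..<n} x = 1" using H by (auto simp: Pn_def)
  then show "v \<le> BB p n m" unfolding BB_def using lagr_bound[OF H m p s1] by simp
qed

lemma lam_ge: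
  assumes H: "H \<in> Pn P n" and m: "card (fst Q) \<le> n" and p: "p \<ge> 1" and s1: "card (fst Q) \<ge> 1"
    and x: "pnorm p {0..<n} x = 1"
  shows "lagr_poly Q H x \<le> lam p Q H"
  unfolding lam_def
proof (rule cSup_upper)
  show "lagr_poly Q H x \<in> {lagr_poly Q H x |x. pnorm p (fst H) x = 1}" using x H by (auto simp: Pn_def)
  show "bdd_above {lagr_poly Q H x |x. pnorm p (fst H) x = 1}"
  proof (rule bdd_aboveI)
    fix v assume "v \<in> {lagr_poly Q H x |x. pnorm p (fst H) x = 1}"
    then obtain x where "v = lagr_poly Q H x" "pnorm p {0..<n} x = 1" using H by (auto simp: Pn_def)
    then show "v \<le> BB p n (card (fst Q))" unfolding BB_def using lagr_bound[OF H _ m p s1] by simp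
  qed
qed

lemma lam_n_le:
  assumes m: "card (fst Q) \<le> m" "m \<le> n" and p: "p \<ge> 1" and s1: "card (fst Q) \<ge> 1"
  shows "lam_n p Q P n \<le> BB p n m"
  unfolding lam_n_def
proof (rule cSup_least)
  show "lam p Q ` Pn P n \<noteq> {}" using Pn_nonempty[OF her Pne Qr] by simp
  fix v assume "v \<in> lam p Q ` Pn P n"
  then show "v \<le> BB p n m" using lam_le[OF _ m p s1] by auto
qed

lemma lam_n_ge:
  assumes "H \<in> Pn P n"
  shows "lam p Q H \<le> lam_n p Q P n"
  unfolding lam_n_def
  using assms Pn_finite[OF her Pne Qr] by (intro cSup_upper bdd_above_finite) auto

lemma lam_n_lower:
  assumes n: "card (fst Q) \<le> n" and p: "p \<ge> 1" and s1: "card (fst Q) \<ge> 1"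
  shows "fact (card (fst Q)) * real (ex_num Q P n) * real n powr (- real (card (fst Q)) / p) \<le> lam_n p Q P n"
proof -
  let ?s = "card (fst Q)"
  let ?c = "real n powr (-1/p)"
  obtain H where H: "H \<in> Pn P n" "num_copies Q H = ex_num Q P n" using ex_attained[OF her Pne Qr] by blast
  have HP: "H \<in> P" and V: "fst H = {0..<n}" using H by (auto simp: Pn_def)
  have n1: "n \<ge> 1" using n s1 by linarith
  have np: "real n > 0" using n1 by simp
  have "lagr_poly Q H (\<lambda>_. ?c) = fact ?s * (\<Sum>I\<in>{I. I \<subseteq> fst H \<and> card I = ?s}. real (num_copies Q (induced H I)) * ?c ^ ?s)"
    unfolding lagr_poly_def by (intro arg_cong2[where f="(*)"] refl sum.cong) auto
  also have "\<dots> = fact ?s * ((\<Sum>I\<in>{I. I \<subseteq> fst H \<and> card I = ?s}. real (num_copies Q (induced H I))) * ?c ^ ?s)"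
    by (simp only: sum_distrib_right)
  also have "\<dots> = fact ?s * ?c ^ ?s * real (\<Sum>I\<in>{I. I \<subseteq> fst H \<and> card I = ?s}. num_copies Q (induced H I))"
    by simp
  also have "\<dots> = fact ?s * ?c ^ ?s * real (ex_num Q P n)"
    using double_count_s[OF P_fin[OF her Pne Qr HP] finQ[OF her Pne Qr]] H(2) by simp
  also have "?c ^ ?s = real n powr (- real ?s / p)"
  proof -
    have "?c ^ ?s = ?c powr real ?s" using np by (simp add: powr_realpow)
    also have "\<dots> = real n powr (-1/p * real ?s)" by (simp add: powr_powr)
    finally show ?thesis by (simp add: algebra_simps)
  qed
  finally have "lagr_poly Q H (\<lambda>_. ?c) = fact ?s * real (ex_num Q P n) * real n powr (- real ?s / p)"
    by (simp add: algebra_simps)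
  moreover have "lagr_poly Q H (\<lambda>_. ?c) \<le> lam p Q H"
    using lam_ge[OF H(1) n p s1 const_pnorm[OF n1 p]] .
  moreover have "lam p Q H \<le> lam_n p Q P n" by (rule lam_n_ge[OF H(1)])
  ultimately show ?thesis by linarith
qed

lemma lam_ext:
  assumes H: "H \<in> Pn P n" and n: "card (fst Q) \<le> n" and p: "p \<ge> 1" and s1: "card (fst Q) \<ge> 1"
  shows "lam p Q H \<le> lam_n p Q P (Suc n)"
proof -
  let ?s = "card (fst Q)"
  let ?H' = "(insert n (fst H), snd H)"
  have HP: "H \<in> P" and V: "fst H = {0..<n}" using H by (auto simp: Pn_def)
  have "?H' \<in> P" using P_insert[OF her Pne Qr HP] V by simp
  moreover have fH': "fst ?H' = {0..<Suc n}" using V by auto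
  ultimately have H': "?H' \<in> Pn P (Suc n)" by (simp add: Pn_def)
  have "lam p Q H \<le> lam p Q ?H'"
    unfolding lam_def[of p Q H]
  proof (rule cSup_least)
    have "n \<ge> 1" using n s1 by linarith
    then show "{lagr_poly Q H x |x. pnorm p (fst H) x = 1} \<noteq> {}"
      using const_pnorm[OF _ p] V by auto
    fix v assume "v \<in> {lagr_poly Q H x |x. pnorm p (fst H) x = 1}"
    then obtain x where v: "v = lagr_poly Q H x" and x: "pnorm p {0..<n} x = 1" using V by auto
    let ?x = "x(n := 0)"
    have "pnorm p {0..<Suc n} ?x = pnorm p {0..<n} x"
    proof -
      have "(\<Sum>i\<in>{0..<Suc n}. \<bar>?x i\<bar> powr p) = (\<Sum>i\<in>{0..<n}. \<bar>?x i\<bar> powr p)"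
        by simp
      also have "\<dots> = (\<Sum>i\<in>{0..<n}. \<bar>x i\<bar> powr p)" by (intro sum.cong) auto
      finally show ?thesis by (simp add: pnorm_def)
    qed
    then have x': "pnorm p {0..<Suc n} ?x = 1" using x by simp
    have "lagr_poly Q ?H' ?x = lagr_poly Q H x"
      unfolding lagr_poly_def
    proof (intro arg_cong2[where f="(*)"] refl)
      show "(\<Sum>I\<in>{I. I \<subseteq> fst ?H' \<and> card I = ?s}. real (num_copies Q (induced ?H' I)) * (\<Prod>i\<in>I. ?x i))
          = (\<Sum>I\<in>{I. I \<subseteq> fst H \<and> card I = ?s}. real (num_copies Q (induced H I)) * (\<Prod>i\<in>I. x i))"
      proof (rule sum.mono_neutral_cong_right)
        show "finite {I. I \<subseteq> fst ?H' \<and> card I = ?s}" using fH' by simp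
        show "{I. I \<subseteq> fst H \<and> card I = ?s} \<subseteq> {I. I \<subseteq> fst ?H' \<and> card I = ?s}" by auto
        show "\<forall>I\<in>{I. I \<subseteq> fst ?H' \<and> card I = ?s} - {I. I \<subseteq> fst H \<and> card I = ?s}.
                real (num_copies Q (induced ?H' I)) * (\<Prod>i\<in>I. ?x i) = 0"
        proof
          fix I assume I: "I \<in> {I. I \<subseteq> fst ?H' \<and> card I = ?s} - {I. I \<subseteq> fst H \<and> card I = ?s}"
          then have "n \<in> I" using V by auto
          moreover have "finite I" using I fH' finite_subset by auto
          ultimately have "(\<Prod>i\<in>I. ?x i) = 0" by (intro prod_zero) auto
          then show "real (num_copies Q (induced ?H' I)) * (\<Prod>i\<in>I. ?x i) = 0" by simp
        qed
        fix I assume I: "I \<in> {I. I \<subseteq> fst H \<and> card I = ?s}"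
        then have nI: "n \<notin> I" using V by auto
        have "induced ?H' I = induced H I" by (simp add: induced_def)
        moreover have "(\<Prod>i\<in>I. ?x i) = (\<Prod>i\<in>I. x i)" using nI by (intro prod.cong) auto
        ultimately show "real (num_copies Q (induced ?H' I)) * (\<Prod>i\<in>I. ?x i) = real (num_copies Q (induced H I)) * (\<Prod>i\<in>I. x i)"
          by simp
      qed
    qed
    moreover have "lagr_poly Q ?H' ?x \<le> lam p Q ?H'"
      using lam_ge[OF H' _ p s1 x'] n by simp
    ultimately show "v \<le> lam p Q ?H'" using v by simp
  qed
  also have "\<dots> \<le> lam_n p Q P (Suc n)" by (rule lam_n_ge[OF H'])
  finally show ?thesis .
qed

lemma lam_n_mono:
  assumes n: "card (fst Q) \<le> n" and p: "p \<ge> 1" and s1: "card (fst Q) \<ge> 1"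
  shows "lam_n p Q P n \<le> lam_n p Q P (Suc n)"
  unfolding lam_n_def[of p Q P n]
proof (rule cSup_least)
  show "lam p Q ` Pn P n \<noteq> {}" using Pn_nonempty[OF her Pne Qr] by simp
  fix v assume "v \<in> lam p Q ` Pn P n"
  then show "v \<le> lam_n p Q P (Suc n)" using lam_ext[OF _ n p s1] by auto
qed

end
lemma h_eq:
  assumes "s \<le> n" "n > 0"
  shows "fact s * real (n choose s) / real n ^ s = (\<Prod>i\<in>{0..<s}. 1 - real i / real n)"
proof -
  have np: "real n > 0" using assms by simp
  have "fact s * real (n choose s) / real n ^ s
      = (\<Prod>i\<in>{0..<s}. real (s - i)) * (\<Prod>i\<in>{0..<s}. real (n - i) / real (s - i)) / (\<Prod>i\<in>{0..<s}. real n)"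
    using assms(1) by (simp add: fact_prod_rev binomial_altdef_of_nat)
  also have "\<dots> = (\<Prod>i\<in>{0..<s}. real (s - i) * (real (n - i) / real (s - i)) / real n)"
    by (simp add: prod.distrib prod_dividef)
  also have "\<dots> = (\<Prod>i\<in>{0..<s}. 1 - real i / real n)"
  proof (rule prod.cong)
    fix i assume i: "i \<in> {0..<s}"
    then have "real (s - i) > 0" "real (n - i) = real n - real i" using assms by auto
    then show "real (s - i) * (real (n - i) / real (s - i)) / real n = 1 - real i / real n"
      using np by (simp add: field_simps)
  qed simp
  finally show ?thesis .
qed

lemma h_tendsto: "(\<lambda>n. fact s * real (n choose s) / real n ^ s) \<longlonglongrightarrow> 1"
proof -
  have "(\<lambda>n. \<Prod>i\<in>{0..<s}. 1 - real i / real n) \<longlonglongrightarrow> (\<Prod>i\<in>{0..<s}. 1 - 0)"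
    by (intro tendsto_prod tendsto_diff tendsto_const lim_const_over_n)
  then have "(\<lambda>n. \<Prod>i\<in>{0..<s}. 1 - real i / real n) \<longlonglongrightarrow> 1" by simp
  moreover have "eventually (\<lambda>n. (\<Prod>i\<in>{0..<s}. 1 - real i / real n) = fact s * real (n choose s) / real n ^ s) sequentially"
    using eventually_ge_at_top[of "max s 1"] by eventually_elim (simp add: h_eq)
  ultimately show ?thesis by (rule Lim_transform_eventually)
qed

context
  fixes r :: nat and Q :: hgraph and P :: "hgraph set" and p :: real
  assumes her: "hereditary r P" and Pne: "P \<noteq> {}" and Qr: "is_rgraph r Q"
    and p1: "p \<ge> 1" and s1: "card (fst Q) \<ge> 1"
begin

definition gg :: "nat \<Rightarrow> real" where
  "gg n = lam_n p Q P n * real n powr (real (card (fst Q)) / p - real (card (fst Q)))"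

definition hh :: "nat \<Rightarrow> real" where
  "hh n = fact (card (fst Q)) * real (n choose card (fst Q)) / real n ^ card (fst Q)"

lemma gg_lower:
  assumes n: "card (fst Q) \<le> n"
  shows "dd Q P n * hh n \<le> gg n"
proof -
  let ?s = "card (fst Q)"
  have np: "real n > 0" using n s1 by simp
  have C: "real (n choose ?s) > 0" using n by simp
  have "dd Q P n * hh n = fact ?s * real (ex_num Q P n) / real n ^ ?s"
    unfolding dd_def[OF her Pne Qr] hh_def using C by (simp add: field_simps)
  also have "\<dots> = fact ?s * real (ex_num Q P n) * real n powr (- real ?s / p) * real n powr (real ?s / p - real ?s)"
  proof -
    have "real n powr (- real ?s / p) * real n powr (real ?s / p - real ?s) = real n powr (- real ?s)"
      by (simp add: powr_add[symmetric])
    also have "\<dots> = 1 / real n ^ ?s" using np by (simp add: powr_minus_divide powr_realpow)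
    finally show ?thesis by (simp add: mult.assoc)
  qed
  also have "\<dots> \<le> lam_n p Q P n * real n powr (real ?s / p - real ?s)"
    using lam_n_lower[OF her Pne Qr n p1 s1] by (intro mult_right_mono) auto
  finally show ?thesis unfolding gg_def .
qed

lemma gg_upper:
  assumes m: "card (fst Q) \<le> m" "m \<le> n"
  shows "gg n \<le> dd Q P m + fact (card (fst Q)) * real (ex_num Q P m) * real n powr (real (card (fst Q)) / p - real (card (fst Q)))"
proof -
  let ?s = "card (fst Q)"
  let ?e = "real n powr (real ?s / p - real ?s)"
  have np: "real n > 0" using m s1 by simp
  have "gg n \<le> BB Q P p n m * ?e"
    unfolding gg_def using lam_n_le[OF her Pne Qr m p1 s1] by (intro mult_right_mono) auto
  also have "BB Q P p n m * ?e = dd Q P m * (real n powr (real ?s - real ?s / p) * ?e) + fact ?s * real (ex_num Q P m) * ?e"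
    unfolding BB_def[OF her Pne Qr] by (simp add: algebra_simps)
  also have "real n powr (real ?s - real ?s / p) * ?e = 1"
    using np by (simp add: powr_add[symmetric])
  finally show ?thesis by simp
qed

lemma dd_conv: "\<exists>L. dd Q P \<longlonglongrightarrow> L \<and> (\<forall>m\<ge>card (fst Q). L \<le> dd Q P m)"
proof -
  let ?s = "card (fst Q)"
  have "decseq (\<lambda>n. dd Q P (n + ?s))"
    unfolding decseq_def using dd_anti[OF her Pne Qr] by simp
  moreover have "\<forall>i. 0 \<le> dd Q P (i + ?s)" using dd_nonneg[OF her Pne Qr] by simp
  ultimately obtain L where L: "(\<lambda>n. dd Q P (n + ?s)) \<longlonglongrightarrow> L" "\<forall>i. L \<le> dd Q P (i + ?s)"
    by (rule decseq_convergent)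
  have "dd Q P \<longlonglongrightarrow> L" using L(1) by (rule LIMSEQ_offset)
  moreover have "\<forall>m\<ge>?s. L \<le> dd Q P m" using L(2) by (metis le_add_diff_inverse2)
  ultimately show ?thesis by blast
qed

lemma pi_dens_eq: "pi_dens Q P = lim (dd Q P)"
  unfolding pi_dens_def dd_def[OF her Pne Qr, abs_def] ..

lemma main_ineq: "lam_prop p Q P \<ge> pi_dens Q P"
proof -
  let ?s = "card (fst Q)"
  obtain L where L: "dd Q P \<longlonglongrightarrow> L" "\<forall>m\<ge>?s. L \<le> dd Q P m" using dd_conv by blast
  have piL: "pi_dens Q P = L" unfolding pi_dens_eq using L(1) by (rule limI)
  have dh: "(\<lambda>n. dd Q P n * hh n) \<longlonglongrightarrow> L * 1"
    unfolding hh_def by (intro tendsto_mult L(1) h_tendsto)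
  have lp: "lam_prop p Q P = lim gg" unfolding lam_prop_def gg_def ..
  have "\<exists>G. gg \<longlonglongrightarrow> G \<and> L \<le> G"
  proof (cases "p = 1")
    case True
    have e0: "real ?s / p - real ?s = 0" using True by simp
    have mono: "gg m \<le> gg n" if "?s \<le> m" "m \<le> n" for m n
    proof -
      have "lam_n p Q P m \<le> lam_n p Q P n"
        using that(2)
      proof (induction n rule: dec_induct)
        case base then show ?case by simp
      next
        case (step k)
        then show ?case using lam_n_mono[OF her Pne Qr _ p1 s1, of k] that(1) by linarith
      qed
      moreover have "m > 0" "n > 0" using that s1 by auto
      ultimately show ?thesis unfolding gg_def e0 by simp
    qed
    have bnd: "norm (gg (n + ?s)) \<le> dd Q P ?s + fact ?s * real (ex_num Q P ?s)" for n
    proof -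
      have "0 \<le> dd Q P (n + ?s) * hh (n + ?s)"
        using dd_nonneg[OF her Pne Qr] by (simp add: hh_def)
      also have "\<dots> \<le> gg (n + ?s)" by (rule gg_lower) simp
      finally have g0: "0 \<le> gg (n + ?s)" .
      have "gg (n + ?s) \<le> dd Q P ?s + fact ?s * real (ex_num Q P ?s) * real (n + ?s) powr (real ?s / p - real ?s)"
        by (rule gg_upper) auto
      also have "real (n + ?s) powr (real ?s / p - real ?s) = 1" using e0 s1 by simp
      finally show ?thesis using g0 by simp
    qed
    have bs: "Bseq (\<lambda>n. gg (n + ?s))" by (intro BseqI') (rule bnd)
    have "convergent gg"
      by (rule Bseq_monoseq_convergent'_inc[of gg ?s, OF bs mono])
    then have G: "gg \<longlonglongrightarrow> lim gg" by (simp add: convergent_LIMSEQ_iff)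
    have "L * 1 \<le> lim gg"
      using dh G by (rule LIMSEQ_le) (use gg_lower in \<open>auto intro!: exI[of _ ?s]\<close>)
    then show ?thesis using G by auto
  next
    case False
    then have pg: "p > 1" using p1 by simp
    have eneg: "real ?s / p - real ?s < 0"
    proof -
      have "real ?s / p < real ?s" using pg s1 by (simp add: divide_less_eq)
      then show ?thesis by simp
    qed
    have "gg \<longlonglongrightarrow> L"
    proof (rule order_tendstoI)
      fix a assume a: "a < L"
      have "eventually (\<lambda>n. a < dd Q P n * hh n) sequentially"
        using order_tendstoD(1)[OF dh] a by simp
      moreover have "eventually (\<lambda>n. ?s \<le> n) sequentially" by (rule eventually_ge_at_top)
      ultimately show "eventually (\<lambda>n. a < gg n) sequentially"
        by eventually_elim (use gg_lower in \<open>fastforce\<close>)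
    next
      fix a assume a: "L < a"
      define b where "b = (L + a) / 2"
      have bL: "L < b" "b < a" using a by (auto simp: b_def)
      have "eventually (\<lambda>n. dd Q P n < b) sequentially" using order_tendstoD(2)[OF L(1) bL(1)] .
      then obtain N where N: "\<forall>n\<ge>N. dd Q P n < b" by (auto simp: eventually_sequentially)
      define m where "m = max N ?s"
      have dm: "dd Q P m < b" using N by (simp add: m_def)
      have ms: "?s \<le> m" by (simp add: m_def)
      have "(\<lambda>n. fact ?s * real (ex_num Q P m) * real n powr (real ?s / p - real ?s)) \<longlonglongrightarrow> fact ?s * real (ex_num Q P m) * 0"
        by (intro tendsto_mult tendsto_const tendsto_neg_powr[OF eneg] filterlim_real_sequentially)
      then have "eventually (\<lambda>n. fact ?s * real (ex_num Q P m) * real n powr (real ?s / p - real ?s) < a - b) sequentially"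
        using bL by (intro order_tendstoD(2)) auto
      moreover have "eventually (\<lambda>n. m \<le> n) sequentially" by (rule eventually_ge_at_top)
      ultimately show "eventually (\<lambda>n. gg n < a) sequentially"
      proof eventually_elim
        case (elim n)
        then show ?case using gg_upper[OF ms elim(2)] dm by linarith
      qed
    qed
    then show ?thesis by auto
  qed
  then obtain G where G: "gg \<longlonglongrightarrow> G" "L \<le> G" by blast
  have "lam_prop p Q P = G" unfolding lp using G(1) by (rule limI)
  then show ?thesis using G(2) piL by simp
qed

end

theorem mainTheorem3:
  fixes p :: real and r s :: nat and Q :: hgraph and P :: "hgraph set"
  assumes "p \<ge> 1" and "r \<ge> 2" and "s \<ge> r"
    and "is_rgraph r Q" and "card (fst Q) = s"
    and "hereditary r P" and "P \<noteq> {}"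
  shows "lam_prop p Q P \<ge> pi_dens Q P"
proof -
  have "card (fst Q) \<ge> 1" using assms(2,3,5) by linarith
  then show ?thesis using main_ineq[OF assms(6,7,4,1)] by blast
qed

end
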